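(* Let $k\ge 1$ and $n\ge k+1$ be integers. The minimum of ${\rm dc}(G)$ over all $k$-connected graphs $G$ of order $n$ equals $\min\{n,3k+2\}$. That is, every $k$-connected graph $G$ of order $n$ satisfies ${\rm dc}(G)\ge \min\{n,3k+2\}$, and some $k$-connected graph of order $n$ attains equality.
   Context: All graphs are finite and simple. A detour of a graph is a longest path in it. The detour covering number ${\rm dc}(G)$ is the number of vertices of $G$ that lie in at least one detour. *)

theory Defs
  imports Main
begin

definition graph :: "'a set \<Rightarrow> ('a \<Rightarrow> 'a \<Rightarrow> bool) \<Rightarrow> bool" where
  "graph V E \<longleftrightarrow> finite V \<and> (\<forall>x y. E x y \<longrightarrow> x \<in> V \<and> y \<in> V \<and> x \<noteq> y \<and> E y x)"

text \<open>A path: nonempty list of distinct vertices, consecutive ones adjacent.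
  Its length (number of edges) is length p - 1.\<close>
definition is_path :: "'a set \<Rightarrow> ('a \<Rightarrow> 'a \<Rightarrow> bool) \<Rightarrow> 'a list \<Rightarrow> bool" where
  "is_path V E p \<longleftrightarrow> p \<noteq> [] \<and> distinct p \<and> set p \<subseteq> V \<and>
     (\<forall>i. Suc i < length p \<longrightarrow> E (p ! i) (p ! Suc i))"

definition is_detour :: "'a set \<Rightarrow> ('a \<Rightarrow> 'a \<Rightarrow> bool) \<Rightarrow> 'a list \<Rightarrow> bool" where
  "is_detour V E p \<longleftrightarrow> is_path V E p \<and> (\<forall>q. is_path V E q \<longrightarrow> length q \<le> length p)"

definition dc :: "'a set \<Rightarrow> ('a \<Rightarrow> 'a \<Rightarrow> bool) \<Rightarrow> nat" where
  "dc V E = card {v. \<exists>p. is_detour V E p \<and> v \<in> set p}"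

definition connected_graph :: "'a set \<Rightarrow> ('a \<Rightarrow> 'a \<Rightarrow> bool) \<Rightarrow> bool" where
  "connected_graph V E \<longleftrightarrow>
     (\<forall>u\<in>V. \<forall>v\<in>V. \<exists>p. is_path V E p \<and> hd p = u \<and> last p = v)"

definition del_vertices :: "('a \<Rightarrow> 'a \<Rightarrow> bool) \<Rightarrow> 'a set \<Rightarrow> 'a \<Rightarrow> 'a \<Rightarrow> bool" where
  "del_vertices E S = (\<lambda>x y. E x y \<and> x \<notin> S \<and> y \<notin> S)"

definition k_connected :: "'a set \<Rightarrow> ('a \<Rightarrow> 'a \<Rightarrow> bool) \<Rightarrow> nat \<Rightarrow> bool" where
  "k_connected V E k \<longleftrightarrow> card V \<ge> k + 1 \<and>
     (\<forall>S. S \<subseteq> V \<and> card S < k \<longrightarrow> connected_graph (V - S) (del_vertices E S))"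

end

theory Submission
  imports Defs
begin


lemma path_len_le:
  assumes "is_path V E q" "finite V" shows "length q \<le> card V"
proof -
  have "card (set q) \<le> card V" using assms by (intro card_mono) (auto simp: is_path_def)
  moreover have "card (set q) = length q" using assms distinct_card by (auto simp: is_path_def)
  ultimately show ?thesis by simp
qed

lemma exists_detour:
  assumes "finite V" "v \<in> V" shows "\<exists>p. is_detour V E p"
proof -
  let ?L = "{length q | q. is_path V E q}"
  have pv: "is_path V E [v]" by (simp add: is_path_def assms)
  have "?L \<subseteq> {0..card V}" using path_len_le assms by fastforce
  hence fin: "finite ?L" using finite_subset by blast
  have ne: "?L \<noteq> {}" using pv by blast
  have "Max ?L \<in> ?L" using fin ne by (rule Max_in)
  then obtain q where q: "is_path V E q" "length q = Max ?L" by auto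
  have "\<forall>q'. is_path V E q' \<longrightarrow> length q' \<le> length q"
    using q fin by (auto intro!: Max_ge)
  thus ?thesis using q unfolding is_detour_def by blast
qed

lemma is_path_append:
  assumes "is_path V E xs" "is_path V E ys" "set xs \<inter> set ys = {}" "E (last xs) (hd ys)"
  shows "is_path V E (xs @ ys)"
  unfolding is_path_def
proof (intro conjI allI impI)
  show "xs @ ys \<noteq> []" using assms by (simp add: is_path_def)
  show "distinct (xs @ ys)" using assms by (simp add: is_path_def)
  show "set (xs @ ys) \<subseteq> V" using assms by (simp add: is_path_def)
  fix i assume i: "Suc i < length (xs @ ys)"
  have xs: "xs \<noteq> []" "\<forall>i. Suc i < length xs \<longrightarrow> E (xs ! i) (xs ! Suc i)"
    using assms(1) by (auto simp: is_path_def)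
  have ys: "ys \<noteq> []" "\<forall>i. Suc i < length ys \<longrightarrow> E (ys ! i) (ys ! Suc i)"
    using assms(2) by (auto simp: is_path_def)
  consider (a) "Suc i < length xs" | (b) "Suc i = length xs" | (c) "length xs \<le> i" by linarith
  then show "E ((xs @ ys) ! i) ((xs @ ys) ! Suc i)"
  proof cases
    case a then show ?thesis using xs by (simp add: nth_append)
  next
    case b
    have ii: "i = length xs - 1" using b by simp
    have "(xs @ ys) ! i = last xs" using b xs by (simp add: nth_append last_conv_nth ii)
    moreover have "(xs @ ys) ! Suc i = hd ys" using b ys by (simp add: nth_append hd_conv_nth)
    ultimately show ?thesis using assms(4) by simp
  next
    case c
    have "Suc (i - length xs) < length ys" using c i by simp
    hence "E (ys ! (i - length xs)) (ys ! Suc (i - length xs))" using ys by blast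
    moreover have "Suc i - length xs = Suc (i - length xs)" using c by simp
    ultimately show ?thesis using c by (simp add: nth_append)
  qed
qed

lemma is_path_take:
  assumes "is_path V E p" "0 < j" shows "is_path V E (take j p)"
  using assms unfolding is_path_def
  by (auto dest: in_set_takeD)

lemma is_path_drop:
  assumes "is_path V E p" "j < length p" shows "is_path V E (drop j p)"
  using assms unfolding is_path_def
proof (intro conjI allI impI)
  fix i assume h: "p \<noteq> [] \<and> distinct p \<and> set p \<subseteq> V \<and> (\<forall>i. Suc i < length p \<longrightarrow> E (p ! i) (p ! Suc i))"
    "j < length p" "Suc i < length (drop j p)"
  then show "E (drop j p ! i) (drop j p ! Suc i)" by auto
qed (auto dest: in_set_dropD)

lemma is_path_rev:
  assumes "graph V E" "is_path V E p" shows "is_path V E (rev p)"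
  unfolding is_path_def
proof (intro conjI allI impI)
  show "rev p \<noteq> []" "distinct (rev p)" "set (rev p) \<subseteq> V" using assms(2) by (auto simp: is_path_def)
  fix i assume i: "Suc i < length (rev p)"
  let ?n = "length p"
  have "E (p ! (?n - Suc (Suc i))) (p ! Suc (?n - Suc (Suc i)))"
    using assms(2) i unfolding is_path_def by auto
  moreover have "Suc (?n - Suc (Suc i)) = ?n - Suc i" using i by simp
  ultimately have "E (p ! (?n - Suc (Suc i))) (p ! (?n - Suc i))" by simp
  hence "E (p ! (?n - Suc i)) (p ! (?n - Suc (Suc i)))" using assms(1) by (auto simp: graph_def)
  thus "E (rev p ! i) (rev p ! Suc i)" using i by (simp add: rev_nth)
qed

lemma walk_path:
  assumes "R\<^sup>*\<^sup>* a b"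
  shows "\<exists>q. q \<noteq> [] \<and> distinct q \<and> hd q = a \<and> last q = b \<and> (\<forall>i. Suc i < length q \<longrightarrow> R (q!i) (q!Suc i))"
  using assms
proof (induction rule: converse_rtranclp_induct)
  case base
  show ?case by (rule exI[of _ "[b]"]) simp
next
  case (step a y)
  then obtain q where q: "q \<noteq> []" "distinct q" "hd q = y" "last q = b" "\<forall>i. Suc i < length q \<longrightarrow> R (q!i) (q!Suc i)" by blast
  show ?case
  proof (cases "a \<in> set q")
    case True
    then obtain i where i: "i < length q" "q ! i = a" by (auto simp: in_set_conv_nth)
    show ?thesis
    proof (rule exI[of _ "drop i q"], intro conjI allI impI)
      show "drop i q \<noteq> []" "distinct (drop i q)" using i q by auto
      show "hd (drop i q) = a" using i by (simp add: hd_drop_conv_nth)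
      show "last (drop i q) = b" using i q by (simp add: last_drop)
      fix j assume "Suc j < length (drop i q)"
      then show "R (drop i q ! j) (drop i q ! Suc j)" using q(5) by auto
    qed
  next
    case False
    show ?thesis
    proof (rule exI[of _ "a # q"], intro conjI allI impI)
      show "a # q \<noteq> []" by simp
      show "distinct (a # q)" using False q by simp
      show "hd (a # q) = a" by simp
      show "last (a # q) = b" using q by simp
      fix j assume j: "Suc j < length (a # q)"
      show "R ((a # q) ! j) ((a # q) ! Suc j)"
      proof (cases j)
        case 0 then show ?thesis using step(1) q by (simp add: hd_conv_nth)
      next
        case (Suc j') then show ?thesis using q(5) j by simp
      qed
    qed
  qed
qed



lemma last_take_Suc: "j < length p \<Longrightarrow> last (take (Suc j) p) = p ! j"
  by (simp add: take_Suc_conv_app_nth)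

lemma rerouteL:
  assumes "is_path V E p" "is_path V E q" "set q \<inter> set p = {}" "l < length p" "E (last q) (p ! l)"
  shows "is_path V E (q @ drop l p)" "length (q @ drop l p) = length q + (length p - l)"
    "set q \<subseteq> set (q @ drop l p)"
proof -
  show "is_path V E (q @ drop l p)"
    using assms by (intro is_path_append is_path_drop) (auto simp: hd_drop_conv_nth dest: in_set_dropD)
qed auto

lemma rerouteR:
  assumes "is_path V E p" "is_path V E q" "set q \<inter> set p = {}" "j < length p" "E (p ! j) (hd q)"
  shows "is_path V E (take (Suc j) p @ q)" "length (take (Suc j) p @ q) = Suc j + length q"
    "set q \<subseteq> set (take (Suc j) p @ q)"
proof -
  show "is_path V E (take (Suc j) p @ q)"
    using assms by (intro is_path_append is_path_take) (auto simp: last_take_Suc dest: in_set_takeD)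
qed (use assms in auto)

lemma reroute3:
  assumes "is_path V E p" "is_path V E q" "set q \<inter> set p = {}" "j < l" "l < length p"
    "E (p ! j) (hd q)" "E (last q) (p ! l)"
  shows "is_path V E (take (Suc j) p @ q @ drop l p)"
    "length (take (Suc j) p @ q @ drop l p) = Suc j + length q + (length p - l)"
    "set q \<subseteq> set (take (Suc j) p @ q @ drop l p)"
proof -
  have d: "distinct p" using assms(1) by (simp add: is_path_def)
  have qne: "q \<noteq> []" using assms(2) by (simp add: is_path_def)
  have 1: "is_path V E (q @ drop l p)" by (rule rerouteL(1)[OF assms(1-3) assms(5,7)])
  have "set (take (Suc j) p) \<inter> set (drop l p) = {}"
    using set_take_disj_set_drop_if_distinct[OF d, of "Suc j" l] assms(4) by simp
  moreover have "set (take (Suc j) p) \<inter> set q = {}" using assms(3) by (auto dest: in_set_takeD)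
  ultimately have "set (take (Suc j) p) \<inter> set (q @ drop l p) = {}" by auto
  then show "is_path V E (take (Suc j) p @ q @ drop l p)"
    using assms qne by (intro is_path_append[OF is_path_take[OF assms(1)] 1]) (auto simp: last_take_Suc)
qed (use assms in auto)



lemma core:
  assumes G: "graph V E" and kc: "k_connected V E k" and det: "is_detour V E p"
    and k1: "1 \<le> k" and xV: "x \<in> V" and xnd: "\<not> (\<exists>q. is_detour V E q \<and> x \<in> set q)"
  shows "3 * k + 2 \<le> length p"
proof -
  define L where "L = length p"
  have pp: "is_path V E p" and pmax: "\<forall>q. is_path V E q \<longrightarrow> length q \<le> L"
    using det by (auto simp: is_detour_def L_def)
  have pne: "p \<noteq> []" and pd: "distinct p" and pV: "set p \<subseteq> V" using pp by (auto simp: is_path_def)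
  have xp: "x \<notin> set p" using xnd det by blast
  have notdet: "length q < L" if "is_path V E q" "x \<in> set q" for q
  proof (rule ccontr)
    assume "\<not> length q < L"
    hence "L \<le> length q" by simp
    hence "is_detour V E q" using that pmax unfolding is_detour_def by force
    thus False using xnd that by blast
  qed
  have Esym: "E v u" if "E u v" for u v using G that by (auto simp: graph_def)
  define R where "R = (\<lambda>u v. E u v \<and> u \<notin> set p \<and> v \<notin> set p)"
  define C where "C = {y. R\<^sup>*\<^sup>* x y}"
  have xC: "x \<in> C" by (simp add: C_def)
  have Cin: "y \<in> V \<and> y \<notin> set p" if "y \<in> C" for y
  proof -
    have "R\<^sup>*\<^sup>* x y" using that C_def by simp
    then show ?thesis
    proof (cases rule: rtranclp.cases)
      case rtrancl_refl then show ?thesis using xV xp by simp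
    next
      case (rtrancl_into_rtrancl b) then show ?thesis using G unfolding R_def graph_def by blast
    qed
  qed
  have Rsym: "R v u" if "R u v" for u v using that Esym unfolding R_def by blast
  have Rback: "R\<^sup>*\<^sup>* c a" if "R\<^sup>*\<^sup>* a c" for a c
    using that
  proof (induction rule: rtranclp_induct)
    case base then show ?case by simp
  next
    case (step b c) then show ?case using Rsym converse_rtranclp_into_rtranclp by metis
  qed
  have Cstep: "y \<in> C" if "c \<in> C" "R c y" for c y
    using that unfolding C_def by (auto intro: rtranclp.rtrancl_into_rtrancl)
  have Cpath: "\<exists>q. is_path V E q \<and> set q \<inter> set p = {} \<and> hd q = c \<and> last q = c'"
    if cc: "c \<in> C" "c' \<in> C" for c c'
  proof -
    have "R\<^sup>*\<^sup>* c c'" using cc Rback unfolding C_def by (meson mem_Collect_eq rtranclp_trans)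
    then obtain q where q: "q \<noteq> []" "distinct q" "hd q = c" "last q = c'"
      "\<forall>i. Suc i < length q \<longrightarrow> R (q!i) (q!Suc i)" using walk_path by metis
    have qC: "\<forall>i. i < length q \<longrightarrow> q ! i \<in> C"
    proof (intro allI)
      fix i show "i < length q \<longrightarrow> q ! i \<in> C"
      proof (induction i)
        case 0 then show ?case using q cc by (simp add: hd_conv_nth[symmetric])
      next
        case (Suc i) then show ?case using q(5) Cstep by auto
      qed
    qed
    hence "set q \<subseteq> C" by (auto simp: in_set_conv_nth)
    hence "set q \<subseteq> V" "set q \<inter> set p = {}" using Cin by auto
    moreover have "\<forall>i. Suc i < length q \<longrightarrow> E (q!i) (q!Suc i)" using q(5) unfolding R_def by blast
    ultimately show ?thesis using q unfolding is_path_def by blast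
  qed
  have qlen: "1 \<le> length q" if "is_path V E q" for q using that by (cases q) (auto simp: is_path_def)
  define B where "B = {j. j < L \<and> (\<exists>c\<in>C. E (p!j) c)}"
  have finB: "finite B" unfolding B_def by simp
  have B_lo: "2 \<le> j" if H: "j \<in> B" for j
  proof -
    obtain c where c: "c \<in> C" "E (p!j) c" and jL: "j < L" using H unfolding B_def by auto
    obtain q where q: "is_path V E q" "set q \<inter> set p = {}" "hd q = x" "last q = c"
      using Cpath[OF xC c(1)] by blast
    have e: "E (last q) (p ! j)" using q c Esym by simp
    have "x \<in> set q" using q by (metis hd_in_set is_path_def)
    hence "length (q @ drop j p) < L"
      using notdet rerouteL[OF pp q(1,2) jL[unfolded L_def] e] by blast
    hence "length q + (L - j) < L" using rerouteL[OF pp q(1,2) jL[unfolded L_def] e] L_def by simp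
    thus ?thesis using qlen[OF q(1)] jL by linarith
  qed
  have B_hi: "j + 2 < L" if H: "j \<in> B" for j
  proof -
    obtain c where c: "c \<in> C" "E (p!j) c" and jL: "j < L" using H unfolding B_def by auto
    obtain q where q: "is_path V E q" "set q \<inter> set p = {}" "hd q = c" "last q = x"
      using Cpath[OF c(1) xC] by blast
    have e: "E (p ! j) (hd q)" using q c by simp
    have "x \<in> set q" using q by (metis last_in_set is_path_def)
    hence "length (take (Suc j) p @ q) < L"
      using notdet rerouteR[OF pp q(1,2) jL[unfolded L_def] e] by blast
    hence "Suc j + length q < L" using rerouteR[OF pp q(1,2) jL[unfolded L_def] e] by simp
    thus ?thesis using qlen[OF q(1)] by linarith
  qed
  have B_adj: False if H: "j \<in> B" "Suc j \<in> B" for j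
  proof -
    obtain c where c: "c \<in> C" "E (p!j) c" using H unfolding B_def by auto
    obtain c' where c': "c' \<in> C" "E (p!Suc j) c'" and jL: "Suc j < L" using H unfolding B_def by auto
    obtain q where q: "is_path V E q" "set q \<inter> set p = {}" "hd q = c" "last q = c'"
      using Cpath[OF c(1) c'(1)] by blast
    have e1: "E (p ! j) (hd q)" using q c by simp
    have e2: "E (last q) (p ! Suc j)" using q c' Esym by simp
    note r = reroute3[OF pp q(1,2) lessI jL[unfolded L_def] e1 e2]
    have "length (take (Suc j) p @ q @ drop (Suc j) p) \<le> L" using pmax r(1) by blast
    hence "Suc j + length q + (L - Suc j) \<le> L" using r(2) L_def by simp
    thus False using qlen[OF q(1)] jL by linarith
  qed
  have B_two: "c = c' \<and> c \<noteq> x" if H: "j \<in> B" "j + 2 \<in> B" "c \<in> C" "E (p!j) c" "c' \<in> C" "E (p!(j+2)) c'"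
    for j c c'
  proof -
    have jL: "j + 2 < L" using H unfolding B_def by auto
    obtain q where q: "is_path V E q" "set q \<inter> set p = {}" "hd q = c" "last q = c'"
      using Cpath[OF H(3) H(5)] by blast
    have e1: "E (p ! j) (hd q)" using q H by simp
    have e2: "E (last q) (p ! (j+2))" using q H Esym by simp
    have jl: "j < j + 2" by simp
    note r = reroute3[OF pp q(1,2) jl jL[unfolded L_def] e1 e2]
    have "length (take (Suc j) p @ q @ drop (j+2) p) \<le> L" using pmax r(1) by blast
    hence "Suc j + length q + (L - (j+2)) \<le> L" using r(2) L_def by simp
    hence l1: "length q = 1" using qlen[OF q(1)] jL by linarith
    then obtain a where qa: "q = [a]" by (cases q) auto
    have "c = c'" using q qa by simp
    moreover have "c \<noteq> x"
    proof
      assume "c = x"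
      hence "x \<in> set (take (Suc j) p @ q @ drop (j+2) p)" using r(3) q qa by auto
      hence "length (take (Suc j) p @ q @ drop (j+2) p) < L" using notdet r(1) by blast
      thus False using r(2) l1 jL L_def by simp
    qed
    ultimately show ?thesis by simp
  qed
  define sp where "sp j \<longleftrightarrow> (j + 2 \<in> B \<or> (2 \<le> j \<and> j - 2 \<in> B))" for j
  define ph where "ph j = (if sp j then (SOME c. c \<in> C \<and> E (p!j) c) else p!j)" for j
  have uniq: "ph j \<in> C \<and> E (p!j) (ph j) \<and> (\<forall>c\<in>C. E (p!j) c \<longrightarrow> c = ph j) \<and> ph j \<noteq> x"
    if "j \<in> B" "sp j" for j
  proof -
    have ex: "\<exists>c. c \<in> C \<and> E (p!j) c" using that unfolding B_def by auto
    have s: "ph j \<in> C \<and> E (p!j) (ph j)" using someI_ex[OF ex] that unfolding ph_def by simp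
    show ?thesis
    proof (cases "j + 2 \<in> B")
      case True
      then obtain c' where c': "c' \<in> C" "E (p!(j+2)) c'" using B_def by auto
      have "\<forall>c\<in>C. E (p!j) c \<longrightarrow> c = c'" using B_two[OF that(1) True _ _ c'] by blast
      moreover have "ph j \<noteq> x" using B_two[OF that(1) True _ _ c'] s by blast
      ultimately show ?thesis using s by auto
    next
      case False
      hence j2: "2 \<le> j" "j - 2 \<in> B" using that sp_def by auto
      define i where "i = j - 2"
      have ij: "j = i + 2" using j2 i_def by simp
      obtain c' where c': "c' \<in> C" "E (p!i) c'" using j2 B_def i_def by auto
      have "\<forall>c\<in>C. E (p!j) c \<longrightarrow> c' = c" using B_two[OF j2(2)[folded i_def] _ c'] that(1) ij by blast
      moreover have "c' \<noteq> x" using B_two[OF j2(2)[folded i_def] _ c'] that(1) ij s by blast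
      ultimately show ?thesis using s by metis
    qed
  qed
  define S where "S = ph ` B"
  have SV: "S \<subseteq> V"
  proof
    fix s assume "s \<in> S"
    then obtain j where j: "j \<in> B" "s = ph j" using S_def by auto
    show "s \<in> V"
    proof (cases "sp j")
      case True then show ?thesis using uniq[OF j(1) True] Cin j by auto
    next
      case False then show ?thesis using j pV B_def ph_def L_def by auto
    qed
  qed
  have xS: "x \<notin> S"
  proof
    assume "x \<in> S"
    then obtain j where j: "j \<in> B" "x = ph j" using S_def by auto
    show False
    proof (cases "sp j")
      case True then show ?thesis using uniq[OF j(1) True] j by auto
    next
      case False then show ?thesis using j xp B_def ph_def L_def by auto
    qed
  qed
  have p0S: "p ! 0 \<notin> S"
  proof
    assume "p ! 0 \<in> S"
    then obtain j where j: "j \<in> B" "p ! 0 = ph j" using S_def by auto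
    have p0: "p ! 0 \<in> set p" using pne by simp
    show False
    proof (cases "sp j")
      case True then show ?thesis using uniq[OF j(1) True] j Cin p0 by auto
    next
      case False
      hence "p ! 0 = p ! j" using j ph_def by auto
      moreover have "j < length p" using j B_def L_def by auto
      ultimately have "j = 0" using pd pne nth_eq_iff_index_eq by fastforce
      thus False using B_lo j by fastforce
    qed
  qed
  have p0V: "p ! 0 \<in> V" using pne pV by auto
  have kS: "k \<le> card S"
  proof (rule ccontr)
    assume "\<not> k \<le> card S"
    hence "connected_graph (V - S) (del_vertices E S)" using kc SV by (auto simp: k_connected_def)
    then obtain q where q: "is_path (V - S) (del_vertices E S) q" "hd q = x" "last q = p ! 0"
      using xV xS p0S p0V unfolding connected_graph_def by blast
    have qne: "q \<noteq> []" and qS: "set q \<subseteq> V - S"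
      and qE: "\<forall>i. Suc i < length q \<longrightarrow> del_vertices E S (q!i) (q!Suc i)"
      using q(1) by (auto simp: is_path_def)
    define i0 where "i0 = (LEAST i. i < length q \<and> q ! i \<in> set p)"
    have ex: "\<exists>i. i < length q \<and> q ! i \<in> set p"
      using qne q(3) pne by (intro exI[of _ "length q - 1"]) (metis diff_less last_conv_nth length_greater_0_conv nth_mem zero_less_one)
    have i0: "i0 < length q" "q ! i0 \<in> set p" using LeastI_ex[OF ex] i0_def by auto
    have before: "q ! i \<notin> set p" if "i < i0" for i
      using not_less_Least[of i "\<lambda>i. i < length q \<and> q ! i \<in> set p"] that i0 i0_def by auto
    have q0: "q ! 0 = x" using q(2) qne by (simp add: hd_conv_nth)
    have i0z: "i0 \<noteq> 0" using i0 q0 xp by (metis)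
    have inC: "\<forall>i. i < i0 \<longrightarrow> q ! i \<in> C"
    proof (intro allI)
      fix i show "i < i0 \<longrightarrow> q ! i \<in> C"
      proof (induction i)
        case 0 then show ?case using q0 xC by simp
      next
        case (Suc i)
        show ?case
        proof
          assume si: "Suc i < i0"
          have "R (q ! i) (q ! Suc i)" using qE si i0 before unfolding R_def del_vertices_def
            by (metis Suc_lessD order.strict_trans)
          thus "q ! Suc i \<in> C" using Suc si Cstep by auto
        qed
      qed
    qed
    define c where "c = q ! (i0 - 1)"
    have cC: "c \<in> C" using inC i0z c_def by simp
    have "del_vertices E S c (q ! i0)" using qE i0 i0z c_def
      by (metis Suc_pred' not_gr_zero)
    hence cE: "E c (q ! i0)" by (simp add: del_vertices_def)
    obtain j where j: "j < length p" "q ! i0 = p ! j" using i0 by (auto simp: in_set_conv_nth)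
    have jB: "j \<in> B" using j cE cC Esym B_def L_def by auto
    have "q ! i0 \<notin> S" using qS i0 nth_mem by blast
    moreover have "ph j \<in> S" using jB S_def by auto
    ultimately have "sp j" using j ph_def by (metis (full_types))
    hence "c = ph j" using uniq[OF jB] cC cE Esym j by auto
    hence "c \<in> S" using jB S_def by auto
    moreover have "c \<in> set q" using c_def i0 by simp
    ultimately show False using qS by auto
  qed
  define Sp where "Sp = {j \<in> B. j + 2 \<in> B}"
  have reach: "\<forall>j. j \<in> B \<longrightarrow> ph j \<in> ph ` (B - Sp)"
  proof (intro allI)
    fix j show "j \<in> B \<longrightarrow> ph j \<in> ph ` (B - Sp)"
    proof (induction "L - j" arbitrary: j rule: less_induct)
      case less
      show ?case
      proof
        assume jB: "j \<in> B"
        show "ph j \<in> ph ` (B - Sp)"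
        proof (cases "j \<in> Sp")
          case False then show ?thesis using jB by auto
        next
          case True
          hence j2: "j + 2 \<in> B" using Sp_def by auto
          have s1: "sp j" using j2 sp_def by auto
          have s2: "sp (j+2)" using jB sp_def by auto
          have "ph j = ph (j+2)"
            using B_two[OF jB j2] uniq[OF jB s1] uniq[OF j2 s2] by blast
          moreover have "L - (j + 2) < L - j" using B_hi[OF jB] by simp
          ultimately show ?thesis using less j2 by metis
        qed
      qed
    qed
  qed
  have "S \<subseteq> ph ` (B - Sp)" using reach S_def by auto
  hence "card S \<le> card (ph ` (B - Sp))" using finB by (intro card_mono) auto
  also have "\<dots> \<le> card (B - Sp)" by (rule card_image_le) (use finB in auto)
  finally have kBS: "k \<le> card (B - Sp)" using kS by simp
  have kB: "card (B - Sp) \<le> card B" using finB by (intro card_mono) auto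
  let ?I1 = "B" and ?I2 = "Suc ` B" and ?I3 = "(\<lambda>j. j + 2) ` (B - Sp)"
  have d12: "?I1 \<inter> ?I2 = {}" using B_adj by auto
  have d13: "?I1 \<inter> ?I3 = {}" using Sp_def by auto
  have d23: "?I2 \<inter> ?I3 = {}"
  proof -
    have False if "j \<in> B" "j' \<in> B" "Suc j = j' + 2" for j j'
      using B_adj[of j'] that by simp
    thus ?thesis by auto
  qed
  have sub: "?I1 \<union> ?I2 \<union> ?I3 \<subseteq> {2..<L}" using B_lo B_hi by fastforce
  have "card (?I1 \<union> ?I2 \<union> ?I3) = card ?I1 + card ?I2 + card ?I3"
    using d12 d13 d23 finB by (simp add: card_Un_disjoint Int_Un_distrib2)
  also have "\<dots> = 2 * card B + card (B - Sp)"
    by (simp add: card_image inj_on_def)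
  finally have "2 * card B + card (B - Sp) \<le> L - 2"
    using card_mono[OF _ sub] by simp
  moreover obtain j0 where "j0 \<in> B" using kBS kB k1 by fastforce
  moreover note B_hi[OF this]
  ultimately show ?thesis using kBS kB L_def by linarith
qed



lemma part1:
  assumes k1: "1 \<le> k" and G: "graph V E" and cV: "card V = n" and kc: "k_connected V E k"
  shows "min n (3 * k + 2) \<le> dc V E"
proof -
  have fin: "finite V" using G by (simp add: graph_def)
  have nk: "k + 1 \<le> n" using kc cV by (simp add: k_connected_def)
  then obtain v where v: "v \<in> V" using cV k1 by fastforce
  define D where "D = {v. \<exists>p. is_detour V E p \<and> v \<in> set p}"
  have DV: "D \<subseteq> V" unfolding D_def is_detour_def is_path_def by blast
  have finD: "finite D" using DV fin finite_subset by blast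
  show ?thesis
  proof (cases "V \<subseteq> D")
    case True
    hence "D = V" using DV by blast
    thus ?thesis using cV by (simp add: dc_def D_def[symmetric])
  next
    case False
    then obtain x where x: "x \<in> V" "x \<notin> D" by blast
    obtain p where p: "is_detour V E p" using exists_detour[OF fin v] by blast
    have "3 * k + 2 \<le> length p"
      using core[OF G kc p k1 x(1)] x(2) D_def by blast
    also have "length p = card (set p)" using p by (simp add: is_detour_def is_path_def distinct_card)
    also have "\<dots> \<le> card D" using p finD by (intro card_mono) (auto simp: D_def)
    finally show ?thesis by (simp add: dc_def D_def[symmetric])
  qed
qed

lemma complete_ex:
  assumes "k + 1 \<le> n" "n \<le> 3 * k + 2"
  shows "\<exists>(V :: nat set) E. graph V E \<and> card V = n \<and> k_connected V E k \<and> dc V E = min n (3 * k + 2)"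
proof -
  define V where "V = {0..<n}"
  define E where "E = (\<lambda>u v. u \<in> V \<and> v \<in> V \<and> u \<noteq> v)"
  have G: "graph V E" unfolding graph_def E_def V_def by auto
  have cV: "card V = n" by (simp add: V_def)
  have conn: "connected_graph (V - S) (del_vertices E S)" for S
    unfolding connected_graph_def
  proof (intro ballI)
    fix u v assume uv: "u \<in> V - S" "v \<in> V - S"
    show "\<exists>p. is_path (V - S) (del_vertices E S) p \<and> hd p = u \<and> last p = v"
    proof (cases "u = v")
      case True then show ?thesis using uv by (intro exI[of _ "[u]"]) (simp add: is_path_def)
    next
      case False
      have "is_path (V - S) (del_vertices E S) [u, v]"
        using uv False unfolding is_path_def del_vertices_def E_def by (auto simp: less_Suc_eq)
      then show ?thesis by (intro exI[of _ "[u, v]"]) simp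
    qed
  qed
  have kc: "k_connected V E k" using assms conn by (simp add: k_connected_def cV)
  have fin: "finite V" by (simp add: V_def)
  have pfull: "is_path V E [0..<n]"
    unfolding is_path_def E_def V_def using assms by auto
  have det: "is_detour V E [0..<n]"
    unfolding is_detour_def using pfull path_len_le[OF _ fin] cV by auto
  have "{v. \<exists>p. is_detour V E p \<and> v \<in> set p} = V"
  proof
    show "{v. \<exists>p. is_detour V E p \<and> v \<in> set p} \<subseteq> V" unfolding is_detour_def is_path_def by blast
    show "V \<subseteq> {v. \<exists>p. is_detour V E p \<and> v \<in> set p}" using det V_def by auto
  qed
  hence "dc V E = n" using cV by (simp add: dc_def)
  thus ?thesis using G cV kc assms by (intro exI[of _ V] exI[of _ E]) simp
qed



lemma comb1:
  assumes A: "A \<subseteq> {..<l}" and no3: "\<forall>i. i + 2 < l \<longrightarrow> i \<in> A \<or> Suc i \<in> A \<or> i + 2 \<in> A"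
  shows "l \<le> 3 * card A + 2"
proof -
  have finA: "finite A" using A finite_subset by blast
  have "{2..<l} \<subseteq> A \<union> Suc ` A \<union> (\<lambda>a. a + 2) ` A"
  proof
    fix p assume p: "p \<in> {2..<l}"
    then have "p - 2 \<in> A \<or> Suc (p - 2) \<in> A \<or> p - 2 + 2 \<in> A" using no3[rule_format, of "p - 2"] by auto
    moreover have "Suc (p - 2) = p - 1" "p - 2 + 2 = p" "p = Suc (p - 1)" "p = (p - 2) + 2" using p by auto
    ultimately have "p - 2 \<in> A \<or> p - 1 \<in> A \<or> p \<in> A" by auto
    moreover have "p \<in> Suc ` A" if "p - 1 \<in> A" using that p by (intro image_eqI[of _ _ "p - 1"]) auto
    moreover have "p \<in> (\<lambda>a. a + 2) ` A" if "p - 2 \<in> A" using that p by (intro image_eqI[of _ _ "p - 2"]) auto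
    ultimately show "p \<in> A \<union> Suc ` A \<union> (\<lambda>a. a + 2) ` A" by blast
  qed
  hence "card {2..<l} \<le> card (A \<union> Suc ` A \<union> (\<lambda>a. a + 2) ` A)" using finA by (intro card_mono) auto
  also have "\<dots> \<le> card A + card (Suc ` A) + card ((\<lambda>a. a + 2) ` A)"
    by (meson card_Un_le add_le_mono1 order_trans)
  also have "\<dots> \<le> 3 * card A" using card_image_le[OF finA, of Suc] card_image_le[OF finA, of "\<lambda>a. a + 2"] by simp
  finally show ?thesis by simp
qed

lemma comb2:
  assumes A: "A \<subseteq> {..<l}" and no3: "\<forall>i. i + 2 < l \<longrightarrow> i \<in> A \<or> Suc i \<in> A \<or> i + 2 \<in> A"
    and i0: "i0 < l" "i0 \<notin> A" "0 < i0 \<longrightarrow> i0 - 1 \<in> A" "Suc i0 < l \<longrightarrow> Suc i0 \<in> A"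
  shows "l \<le> 3 * card A + 1"
proof -
  have finA: "finite A" using A finite_subset by blast
  define AL where "AL = A \<inter> {..<i0}"
  define AR where "AR = A \<inter> {i0<..}"
  have finL: "finite AL" "finite AR" using finA AL_def AR_def by auto
  have AU: "A = AL \<union> AR" using i0(2) AL_def AR_def by auto
  have ALR: "AL \<inter> AR = {}" using AL_def AR_def by auto
  have L: "{..<i0} \<subseteq> AL \<union> (\<lambda>a. a - 1) ` AL \<union> (\<lambda>a. a - 2) ` AL"
  proof
    fix p assume p: "p \<in> {..<i0}"
    show "p \<in> AL \<union> (\<lambda>a. a - 1) ` AL \<union> (\<lambda>a. a - 2) ` AL"
    proof (cases "p + 2 < i0")
      case True
      then have "p \<in> A \<or> Suc p \<in> A \<or> p + 2 \<in> A" using no3 i0(1) by auto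
      hence "p \<in> AL \<or> Suc p \<in> AL \<or> p + 2 \<in> AL" using True p AL_def by auto
      moreover have "p \<in> (\<lambda>a. a - 1) ` AL" if "Suc p \<in> AL" using that by (intro image_eqI[of _ _ "Suc p"]) simp_all
      moreover have "p \<in> (\<lambda>a. a - 2) ` AL" if "p + 2 \<in> AL" using that by (intro image_eqI[of _ _ "p + 2"]) simp_all
      ultimately show ?thesis by blast
    next
      case False
      have m: "i0 - 1 \<in> AL" using i0 p AL_def by auto
      have "p = i0 - 1 \<or> p = (i0 - 1) - 1" using False p by auto
      thus ?thesis using m by blast
    qed
  qed
  have R: "{i0<..<l} \<subseteq> AR \<union> Suc ` AR \<union> (\<lambda>a. a + 2) ` AR"
  proof
    fix p assume p: "p \<in> {i0<..<l}"
    show "p \<in> AR \<union> Suc ` AR \<union> (\<lambda>a. a + 2) ` AR"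
    proof (cases "i0 + 3 \<le> p")
      case True
      then have "p - 2 \<in> A \<or> Suc (p - 2) \<in> A \<or> p - 2 + 2 \<in> A" using no3[rule_format, of "p - 2"] p by auto
      moreover have "Suc (p - 2) = p - 1" "p - 2 + 2 = p" "p = Suc (p - 1)" "p = (p - 2) + 2" using True by auto
      moreover have "i0 < p - 2" "i0 < p - 1" using True by auto
      ultimately have "p - 2 \<in> AR \<or> p - 1 \<in> AR \<or> p \<in> AR" unfolding AR_def by auto
      moreover have "p \<in> Suc ` AR" if "p - 1 \<in> AR" using that True by (intro image_eqI[of _ _ "p - 1"]) auto
      moreover have "p \<in> (\<lambda>a. a + 2) ` AR" if "p - 2 \<in> AR" using that True by (intro image_eqI[of _ _ "p - 2"]) auto
      ultimately show ?thesis by blast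
    next
      case False
      have m: "Suc i0 \<in> AR" using i0 p AR_def by auto
      have "p = Suc i0 \<or> p = Suc (Suc i0)" using False p by auto
      thus ?thesis using m by blast
    qed
  qed
  have "i0 = card {..<i0}" by simp
  also have "\<dots> \<le> card (AL \<union> (\<lambda>a. a - 1) ` AL \<union> (\<lambda>a. a - 2) ` AL)" using L finL by (intro card_mono) auto
  also have "\<dots> \<le> card AL + card ((\<lambda>a. a - 1) ` AL) + card ((\<lambda>a. a - 2) ` AL)"
    by (meson card_Un_le add_le_mono1 order_trans)
  also have "\<dots> \<le> 3 * card AL"
    using card_image_le[OF finL(1), of "\<lambda>a. a - 1"] card_image_le[OF finL(1), of "\<lambda>a. a - 2"] by simp
  finally have 1: "i0 \<le> 3 * card AL" .
  have "l - Suc i0 = card {i0<..<l}" by simp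
  also have "\<dots> \<le> card (AR \<union> Suc ` AR \<union> (\<lambda>a. a + 2) ` AR)" using R finL by (intro card_mono) auto
  also have "\<dots> \<le> card AR + card (Suc ` AR) + card ((\<lambda>a. a + 2) ` AR)"
    by (meson card_Un_le add_le_mono1 order_trans)
  also have "\<dots> \<le> 3 * card AR"
    using card_image_le[OF finL(2), of Suc] card_image_le[OF finL(2), of "\<lambda>a. a + 2"] by simp
  finally have 2: "l - Suc i0 \<le> 3 * card AR" .
  have "card A = card AL + card AR" using AU ALR finL by (simp add: card_Un_disjoint)
  thus ?thesis using 1 2 i0(1) by linarith
qed



lemma mod_ne: "(x::nat) div 2 = y div 2 \<Longrightarrow> x \<noteq> y \<Longrightarrow> x mod 2 \<noteq> y mod 2"
  by (metis div_mult_mod_eq)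
lemma three_same0: "(x::nat) div 2 = y div 2 \<Longrightarrow> y div 2 = z div 2 \<Longrightarrow> x \<noteq> y \<Longrightarrow> x \<noteq> z \<Longrightarrow> y \<noteq> z \<Longrightarrow> False"
proof -
  assume h: "x div 2 = y div 2" "y div 2 = z div 2" "x \<noteq> y" "x \<noteq> z" "y \<noteq> z"
  have "x mod 2 \<noteq> y mod 2" "x mod 2 \<noteq> z mod 2" "y mod 2 \<noteq> z mod 2" using h mod_ne by metis+
  thus False by (auto simp: mod2_eq_if split: if_splits)
qed
lemma three_same: "k \<le> (a::nat) \<Longrightarrow> k \<le> b \<Longrightarrow> k \<le> c \<Longrightarrow> a \<noteq> b \<Longrightarrow> a \<noteq> c \<Longrightarrow> b \<noteq> c
  \<Longrightarrow> (a - k) div 2 = (b - k) div 2 \<Longrightarrow> (b - k) div 2 = (c - k) div 2 \<Longrightarrow> False"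
  by (rule three_same0[of "a - k" "b - k" "c - k"]) auto
definition ff :: "nat \<Rightarrow> nat \<Rightarrow> nat" where
  "ff k i = (if i mod 3 = 2 then i div 3 else k + 2 * (i div 3) + i mod 3)"

lemma dr: fixes i :: nat obtains d r where "i = 3 * d + r" "r = 0 \<or> r = 1 \<or> r = 2" "i div 3 = d" "i mod 3 = r"
proof -
  have "i mod 3 < 3" by simp
  hence m: "i mod 3 = 0 \<or> i mod 3 = 1 \<or> i mod 3 = 2" by arith
  have e: "i = 3 * (i div 3) + i mod 3" by simp
  show thesis by (rule that[OF e m refl refl])
qed

lemma ff_lt: "i < 3 * k + 2 \<Longrightarrow> ff k i < 3 * k + 2"
  by (rule dr[of i]) (auto simp: ff_def)

lemma ff_small: "i < 3 * k + 2 \<Longrightarrow> (ff k i < k) = (i mod 3 = 2)"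
  by (rule dr[of i]) (auto simp: ff_def)

lemma ff_inj: "inj_on (ff k) {0..<3 * k + 2}"
proof (rule inj_onI)
  fix i j assume i: "i \<in> {0..<3 * k + 2}" and j: "j \<in> {0..<3 * k + 2}" and e: "ff k i = ff k j"
  obtain d r where a: "i = 3 * d + r" "r = 0 \<or> r = 1 \<or> r = 2" "i div 3 = d" "i mod 3 = r" by (rule dr)
  obtain d' r' where b: "j = 3 * d' + r'" "r' = 0 \<or> r' = 1 \<or> r' = 2" "j div 3 = d'" "j mod 3 = r'" by (rule dr)
  have si: "(ff k i < k) = (r = 2)" "(ff k j < k) = (r' = 2)" using ff_small i j a b by auto
  hence m: "(r = 2) = (r' = 2)" using e by simp
  show "i = j" using e a b m i j unfolding ff_def by (auto split: if_splits)
qed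

lemma ff_edge: "Suc i < 3 * k + 2 \<Longrightarrow> ff k i < k \<or> ff k (Suc i) < k \<or>
   (k \<le> ff k i \<and> k \<le> ff k (Suc i) \<and> (ff k i - k) div 2 = (ff k (Suc i) - k) div 2)"
proof -
  assume s: "Suc i < 3 * k + 2"
  obtain d r where a: "i = 3 * d + r" "r = 0 \<or> r = 1 \<or> r = 2" "i div 3 = d" "i mod 3 = r" by (rule dr)
  show ?thesis
  proof (cases "r = 0")
    case True
    hence "Suc i mod 3 = 1" "Suc i div 3 = d" using a by auto
    then show ?thesis using True a unfolding ff_def by auto
  next
    case False
    hence "i mod 3 = 2 \<or> Suc i mod 3 = 2" using a by auto
    then show ?thesis using ff_small[of i k] ff_small[of "Suc i" k] s by auto
  qed
qed
lemma bound_lemma: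
  fixes k :: nat
  assumes Epair: "\<And>u v. E u v \<Longrightarrow> k \<le> u \<Longrightarrow> k \<le> v \<Longrightarrow> (u - k) div 2 = (v - k) div 2"
    and Eiso1: "\<And>u v. E u v \<Longrightarrow> 3 * k + 2 \<le> v \<Longrightarrow> u < k"
    and Eiso2: "\<And>u v. E u v \<Longrightarrow> 3 * k + 2 \<le> u \<Longrightarrow> v < k"
    and q: "is_path V E q"
  shows "length q \<le> 3 * k + 2 \<and> (\<forall>w\<in>set q. 3 * k + 2 \<le> w \<longrightarrow> length q \<le> 3 * k + 1)"
proof -
  have qd: "distinct q" and qV: "set q \<subseteq> V" and qE: "\<forall>i. Suc i < length q \<longrightarrow> E (q!i) (q!Suc i)"
    using q by (auto simp: is_path_def)
  define A where "A = {i. i < length q \<and> q ! i < k}"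
  have Asub: "A \<subseteq> {..<length q}" using A_def by auto
  have "card A = card ((!) q ` A)" using qd Asub by (intro card_image[symmetric] inj_on_subset[OF inj_on_nth]) auto
  also have "\<dots> \<le> card {0..<k}" by (intro card_mono) (auto simp: A_def)
  finally have cA: "card A \<le> k" by simp
  have no3: "\<forall>i. i + 2 < length q \<longrightarrow> i \<in> A \<or> Suc i \<in> A \<or> i + 2 \<in> A"
  proof (intro allI impI)
    fix i assume i: "i + 2 < length q"
    show "i \<in> A \<or> Suc i \<in> A \<or> i + 2 \<in> A"
    proof (rule ccontr)
      assume "\<not> ?thesis"
      hence ge: "k \<le> q ! i" "k \<le> q ! Suc i" "k \<le> q ! (i + 2)" using i A_def by auto
      have e1: "E (q ! i) (q ! Suc i)" and e2: "E (q ! Suc i) (q ! Suc (Suc i))" using qE i by auto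
      have d: "q ! i \<noteq> q ! Suc i" "q ! i \<noteq> q ! (i + 2)" "q ! Suc i \<noteq> q ! (i + 2)"
        using qd i by (auto simp: nth_eq_iff_index_eq)
      have h1: "(q ! i - k) div 2 = (q ! Suc i - k) div 2" using Epair[OF e1 ge(1,2)] .
      have ii: "q ! Suc (Suc i) = q ! (i + 2)" by (simp add: numeral_2_eq_2)
      have h2: "(q ! Suc i - k) div 2 = (q ! (i + 2) - k) div 2"
        using Epair[OF e2 ge(2)] ge(3) unfolding ii by blast
      show False by (rule three_same[OF ge d h1 h2])
    qed
  qed
  have b1: "length q \<le> 3 * k + 2" using comb1[OF Asub no3] cA by linarith
  have b2: "length q \<le> 3 * k + 1" if w: "w \<in> set q" "3 * k + 2 \<le> w" for w
  proof -
    obtain i0 where i0: "i0 < length q" "q ! i0 = w" using w by (auto simp: in_set_conv_nth)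
    have nA: "i0 \<notin> A" using i0 w A_def by auto
    have l: "0 < i0 \<longrightarrow> i0 - 1 \<in> A"
    proof
      assume "0 < i0"
      hence "E (q ! (i0 - 1)) (q ! i0)" using qE[rule_format, of "i0 - 1"] i0 by simp
      hence "q ! (i0 - 1) < k" by (rule Eiso1) (use i0 w in simp)
      thus "i0 - 1 \<in> A" using i0 A_def by auto
    qed
    have r: "Suc i0 < length q \<longrightarrow> Suc i0 \<in> A"
    proof
      assume s: "Suc i0 < length q"
      hence "E (q ! i0) (q ! Suc i0)" using qE by auto
      hence "q ! Suc i0 < k" by (rule Eiso2) (use i0 w in simp)
      thus "Suc i0 \<in> A" using s A_def by auto
    qed
    show ?thesis using comb2[OF Asub no3 i0(1) nA l r] cA by linarith
  qed
  show ?thesis using b1 b2 by blast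
qed

lemma constr_ex:
  assumes k1: "1 \<le> k" and nk: "3 * k + 2 < n"
  shows "\<exists>(V :: nat set) E. graph V E \<and> card V = n \<and> k_connected V E k \<and> dc V E = min n (3 * k + 2)"
proof -
  define V where "V = {0..<n}"
  define E where "E = (\<lambda>u v. u \<in> V \<and> v \<in> V \<and> u \<noteq> v \<and> (u < k \<or> v < k \<or>
     (k \<le> u \<and> k \<le> v \<and> u < 3 * k + 2 \<and> v < 3 * k + 2 \<and> (u - k) div 2 = (v - k) div 2)))"
  have G: "graph V E" unfolding graph_def E_def V_def by auto
  have cV: "card V = n" by (simp add: V_def)
  have fin: "finite V" by (simp add: V_def)
  have Epair: "(u - k) div 2 = (v - k) div 2" if "E u v" "k \<le> u" "k \<le> v" for u v
    using that unfolding E_def by auto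
  have Eiso1: "u < k" if "E u v" "3 * k + 2 \<le> v" for u v
    using that unfolding E_def by auto
  have Eiso2: "v < k" if "E u v" "3 * k + 2 \<le> u" for u v
    using that unfolding E_def by auto
  have conn: "connected_graph (V - S) (del_vertices E S)" if S: "S \<subseteq> V" "card S < k" for S
    unfolding connected_graph_def
  proof (intro ballI)
    fix u v assume uv: "u \<in> V - S" "v \<in> V - S"
    have nsub: "\<not> {0..<k} \<subseteq> S"
    proof
      assume "{0..<k} \<subseteq> S"
      hence "card {0..<k} \<le> card S" using S fin by (intro card_mono) (auto intro: finite_subset)
      thus False using S by simp
    qed
    obtain j where j: "j < k" "j \<notin> S" using nsub by (auto simp: subset_iff)
    have jV: "j \<in> V" using j nk V_def by auto
    show "\<exists>p. is_path (V - S) (del_vertices E S) p \<and> hd p = u \<and> last p = v"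
    proof (cases "u = v")
      case True then show ?thesis using uv by (intro exI[of _ "[u]"]) (simp add: is_path_def)
    next
      case False
      show ?thesis
      proof (cases "E u v")
        case True
        have "is_path (V - S) (del_vertices E S) [u, v]"
          using uv False True unfolding is_path_def del_vertices_def by (auto simp: less_Suc_eq)
        then show ?thesis by (intro exI[of _ "[u, v]"]) simp
      next
        case nE: False
        have ju: "j \<noteq> u" "j \<noteq> v" using nE False j uv unfolding E_def by auto
        have e1: "E u j" "E j v" using ju j jV uv unfolding E_def by auto
        have "is_path (V - S) (del_vertices E S) [u, j, v]"
          using uv False ju e1 j jV unfolding is_path_def del_vertices_def
          by (auto simp: less_Suc_eq nth_Cons split: nat.splits)
        then show ?thesis by (intro exI[of _ "[u, j, v]"]) simp
      qed
    qed
  qed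
  have kc: "k_connected V E k" using nk conn by (simp add: k_connected_def cV)
  have bound: "length q \<le> 3 * k + 2 \<and> (\<forall>w\<in>set q. 3 * k + 2 \<le> w \<longrightarrow> length q \<le> 3 * k + 1)"
    if q: "is_path V E q" for q
    by (rule bound_lemma[OF Epair Eiso1 Eiso2 q])
  define P where "P = map (ff k) [0..<3 * k + 2]"
  have finj: "inj_on (ff k) {0..<3 * k + 2}" by (rule ff_inj)
  have frange: "ff k i < 3 * k + 2" if "i < 3 * k + 2" for i using ff_lt that by blast
  have fedge: "E (ff k i) (ff k (Suc i))" if "Suc i < 3 * k + 2" for i
  proof -
    have ne: "ff k i \<noteq> ff k (Suc i)"
    proof
      assume eq: "ff k i = ff k (Suc i)"
      have "i = Suc i" by (rule inj_onD[OF finj eq]) (use that in auto)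
      thus False by simp
    qed
    have "ff k i < 3 * k + 2" "ff k (Suc i) < 3 * k + 2" using frange that by auto
    hence inV: "ff k i \<in> V" "ff k (Suc i) \<in> V" using nk V_def by auto
    show ?thesis using ne inV ff_edge[OF that] frange[of i] frange[of "Suc i"] that unfolding E_def by auto
  qed
  have Ppath: "is_path V E P"
    unfolding is_path_def
  proof (intro conjI allI impI)
    show "P \<noteq> []" by (simp add: P_def del: upt_Suc)
    show "distinct P" using finj by (simp add: P_def distinct_map del: upt_Suc)
    show "set P \<subseteq> V"
    proof
      fix y assume "y \<in> set P"
      then obtain i where "i < 3 * k + 2" "y = ff k i" by (auto simp: P_def simp del: upt_Suc)
      thus "y \<in> V" using frange[of i] nk V_def by auto
    qed
    fix i assume "Suc i < length P"
    hence "Suc i < 3 * k + 2" by (simp add: P_def del: upt_Suc)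
    thus "E (P ! i) (P ! Suc i)" using fedge[of i] by (simp add: P_def del: upt_Suc)
  qed
  have Plen: "length P = 3 * k + 2" by (simp add: P_def)
  have Pset: "set P = {0..<3 * k + 2}"
  proof (rule card_subset_eq)
    show "set P \<subseteq> {0..<3 * k + 2}" using frange P_def by auto
    have "card (set P) = length P" using Ppath distinct_card by (auto simp: is_path_def)
    thus "card (set P) = card {0..<3 * k + 2}" using Plen by simp
  qed simp
  have Pdet: "is_detour V E P" using Ppath bound Plen unfolding is_detour_def by auto
  have "{v. \<exists>p. is_detour V E p \<and> v \<in> set p} = {0..<3 * k + 2}"
  proof
    show "{0..<3 * k + 2} \<subseteq> {v. \<exists>p. is_detour V E p \<and> v \<in> set p}" using Pdet Pset by auto
    show "{v. \<exists>p. is_detour V E p \<and> v \<in> set p} \<subseteq> {0..<3 * k + 2}"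
    proof
      fix v assume "v \<in> {v. \<exists>p. is_detour V E p \<and> v \<in> set p}"
      then obtain p where p: "is_detour V E p" "v \<in> set p" by auto
      have "3 * k + 2 \<le> length p" using p Ppath Plen unfolding is_detour_def by auto
      thus "v \<in> {0..<3 * k + 2}" using bound[of p] p unfolding is_detour_def by force
    qed
  qed
  hence "dc V E = 3 * k + 2" by (simp add: dc_def)
  thus ?thesis using G cV kc nk by (intro exI[of _ V] exI[of _ E]) simp
qed


theorem theorem8:
  fixes k n :: nat
  assumes "k \<ge> 1" and "n \<ge> k + 1"
  shows "(\<forall>(V :: 'a set) E. graph V E \<and> card V = n \<and> k_connected V E k
            \<longrightarrow> dc V E \<ge> min n (3 * k + 2))
       \<and> (\<exists>(V :: nat set) E. graph V E \<and> card V = n \<and> k_connected V E k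
            \<and> dc V E = min n (3 * k + 2))"
proof (intro conjI allI impI)
  fix V :: "'a set" and E
  assume "graph V E \<and> card V = n \<and> k_connected V E k"
  thus "dc V E \<ge> min n (3 * k + 2)" using part1[OF assms(1)] by blast
next
  show "\<exists>(V :: nat set) E. graph V E \<and> card V = n \<and> k_connected V E k
            \<and> dc V E = min n (3 * k + 2)"
  proof (cases "n \<le> 3 * k + 2")
    case True then show ?thesis using complete_ex[OF assms(2)] by blast
  next
    case False then show ?thesis using constr_ex[OF assms(1)] by simp
  qed
qed

end
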